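(* Let $\mu\in\mathbb{R}^N$, $\nu\in\mathbb{R}^M$ be nonnegative vectors with $\sum_i\mu_i=\sum_j\nu_j$, let $c\in\mathbb{R}^{N\times M}$ and $\gamma>0$. Define the map $T:(\alpha,\beta)\mapsto(\alpha',\beta')$ on $\mathbb{R}^N\times\mathbb{R}^M$ by \[ \pi_{ij}=\tfrac1\gamma(\alpha_i+\beta_j-c_{ij})_+,\quad f_i=-\gamma\Bigl(\sum_j\pi_{ij}-\mu_i\Bigr),\quad g_j=-\gamma\Bigl(\sum_i\pi_{ij}-\nu_j\Bigr), \] \[ \alpha'_i=\alpha_i+\tfrac1M\Bigl(f_i-\tfrac{1}{2N}\textstyle\sum_{k}f_k\Bigr),\qquad \beta'_j=\beta_j+\tfrac1N\Bigl(g_j-\tfrac{1}{2M}\textstyle\sum_{l}g_l\Bigr). \] If $(\alpha,\beta)$ is a fixed point of $T$, then the matrix $\pi=(\alpha\oplus\beta-c)_+/\gamma$ is an optimal solution of \[ \min\Bigl\{\sum_{i,j}c_{ij}\pi_{ij}+\tfrac\gamma2\|\pi\|_2^2:\ \pi\in\mathbb{R}^{N\times M},\ \pi\ge0,\ \pi\mathbf 1=\mu,\ \pi^T\mathbf 1=\nu\Bigr\}. \]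
   Context: $(\alpha\oplus\beta)_{ij}:=\alpha_i+\beta_j$, $t_+=\max(t,0)$ applied entrywise, $\|\pi\|_2$ is the Frobenius norm, $\mathbf 1$ is the all-ones vector of appropriate size, and $\pi\ge 0$ is meant entrywise. *)

theory Defs
  imports "HOL-Analysis.Analysis"
begin

text \<open>Vectors in R^N, R^M are indexed by finite types 'n, 'm (N = CARD('n), M = CARD('m));
matrices in R^(N x M) are real^'m^'n, with pi $ i $ j the (i,j) entry.\<close>

definition pos_part :: "real \<Rightarrow> real" where
  "pos_part t = max t 0"

definition plan :: "real \<Rightarrow> real^'m^'n \<Rightarrow> real^'n \<Rightarrow> real^'m \<Rightarrow> real^'m^'n" where
  "plan \<gamma> c \<alpha> \<beta> = (\<chi> i j. pos_part (\<alpha> $ i + \<beta> $ j - c $ i $ j) / \<gamma>)"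

definition T_map :: "real^'n \<Rightarrow> real^'m \<Rightarrow> real^'m^'n \<Rightarrow> real
    \<Rightarrow> (real^'n) \<times> (real^'m) \<Rightarrow> (real^'n) \<times> (real^'m)" where
  "T_map \<mu> \<nu> c \<gamma> ab =
     (let \<alpha> = fst ab; \<beta> = snd ab;
          \<pi> = plan \<gamma> c \<alpha> \<beta>;
          N = real CARD('n); M = real CARD('m);
          f = (\<lambda>i. - \<gamma> * ((\<Sum>j\<in>UNIV. \<pi> $ i $ j) - \<mu> $ i));
          g = (\<lambda>j. - \<gamma> * ((\<Sum>i\<in>UNIV. \<pi> $ i $ j) - \<nu> $ j))
      in ((\<chi> i. \<alpha> $ i + (1 / M) * (f i - (1 / (2 * N)) * (\<Sum>k\<in>UNIV. f k))),
          (\<chi> j. \<beta> $ j + (1 / N) * (g j - (1 / (2 * M)) * (\<Sum>l\<in>UNIV. g l)))))"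

definition ot_objective :: "real^'m^'n \<Rightarrow> real \<Rightarrow> real^'m^'n \<Rightarrow> real" where
  "ot_objective c \<gamma> \<pi> =
     (\<Sum>i\<in>UNIV. \<Sum>j\<in>UNIV. c $ i $ j * \<pi> $ i $ j) + (\<gamma> / 2) * (norm \<pi>)\<^sup>2"

definition feasible :: "real^'n \<Rightarrow> real^'m \<Rightarrow> real^'m^'n \<Rightarrow> bool" where
  "feasible \<mu> \<nu> \<pi> \<longleftrightarrow>
     (\<forall>i j. \<pi> $ i $ j \<ge> 0) \<and>
     (\<forall>i. (\<Sum>j\<in>UNIV. \<pi> $ i $ j) = \<mu> $ i) \<and>
     (\<forall>j. (\<Sum>i\<in>UNIV. \<pi> $ i $ j) = \<nu> $ j)"

definition optimal :: "real^'n \<Rightarrow> real^'m \<Rightarrow> real^'m^'n \<Rightarrow> real \<Rightarrow> real^'m^'n \<Rightarrow> bool" where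
  "optimal \<mu> \<nu> c \<gamma> \<pi> \<longleftrightarrow>
     feasible \<mu> \<nu> \<pi> \<and> (\<forall>\<sigma>. feasible \<mu> \<nu> \<sigma> \<longrightarrow> ot_objective c \<gamma> \<pi> \<le> ot_objective c \<gamma> \<sigma>)"

end

theory Submission
  imports Defs
begin

lemma const_sum_zero:
  fixes f :: "'a::finite \<Rightarrow> real"
  assumes "\<forall>i. f i - (1 / (2 * real CARD('a))) * (\<Sum>k\<in>UNIV. f k) = 0"
  shows "f i = 0"
proof -
  define S where "S = (\<Sum>k\<in>UNIV. f k)"
  have N: "real CARD('a) > 0" by simp
  have fi: "f i = S / (2 * real CARD('a))" for i
  proof -
    have "f i - (1 / (2 * real CARD('a))) * S = 0" using assms unfolding S_def by blast
    then show ?thesis by simp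
  qed
  have "S = (\<Sum>k\<in>UNIV. f k)" by (rule S_def)
  also have "\<dots> = (\<Sum>k::'a\<in>UNIV. S / (2 * real CARD('a)))" by (simp only: fi)
  also have "\<dots> = S / 2" using N by simp
  finally have "S = 0" by simp
  then show ?thesis using fi by simp
qed

lemma pw_aux:
  fixes c p s a g :: real
  assumes "(c + g * p) * s \<ge> a * s" "(c + g * p) * p = a * p" "g > 0"
  shows "c * p + g/2 * p\<^sup>2 + a * s \<le> c * s + g/2 * s\<^sup>2 + a * p"
proof -
  have e: "c * s + g/2 * s\<^sup>2 - c * p - g/2 * p\<^sup>2 = (c + g * p) * s - (c + g * p) * p + g/2 * (s - p)\<^sup>2"
    by (simp add: algebra_simps power2_eq_square)
  have "g/2 * (s - p)\<^sup>2 \<ge> 0" using assms(3) by simp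
  then show ?thesis using e assms(1,2) by linarith
qed

lemma norm_sq_mat: "(norm (x :: real^'m^'n))\<^sup>2 = (\<Sum>i\<in>UNIV. \<Sum>j\<in>UNIV. (x $ i $ j)\<^sup>2)"
  unfolding power2_norm_eq_inner by (simp add: inner_vec_def inner_real_def power2_eq_square)

theorem mainTheorem9:
  fixes \<mu> :: "real^'n" and \<nu> :: "real^'m" and c :: "real^'m^'n"
    and \<gamma> :: real and \<alpha> :: "real^'n" and \<beta> :: "real^'m"
  assumes "\<forall>i. \<mu> $ i \<ge> 0" and "\<forall>j. \<nu> $ j \<ge> 0"
    and "(\<Sum>i\<in>UNIV. \<mu> $ i) = (\<Sum>j\<in>UNIV. \<nu> $ j)"
    and "\<gamma> > 0"
    and fp: "T_map \<mu> \<nu> c \<gamma> (\<alpha>, \<beta>) = (\<alpha>, \<beta>)"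
  shows "optimal \<mu> \<nu> c \<gamma> (plan \<gamma> c \<alpha> \<beta>)"
proof -
  define \<pi> where "\<pi> = plan \<gamma> c \<alpha> \<beta>"
  define f where "f = (\<lambda>i. - \<gamma> * ((\<Sum>j\<in>UNIV. \<pi> $ i $ j) - \<mu> $ i))"
  define g where "g = (\<lambda>j. - \<gamma> * ((\<Sum>i\<in>UNIV. \<pi> $ i $ j) - \<nu> $ j))"
  have M: "real CARD('m) > 0" and N: "real CARD('n) > 0" by simp_all
  define A where "A = (\<chi> i. \<alpha> $ i + (1 / real CARD('m)) * (f i - (1 / (2 * real CARD('n))) * (\<Sum>k\<in>UNIV. f k)))"
  define B where "B = (\<chi> j. \<beta> $ j + (1 / real CARD('n)) * (g j - (1 / (2 * real CARD('m))) * (\<Sum>l\<in>UNIV. g l)))"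
  have TM: "T_map \<mu> \<nu> c \<gamma> (\<alpha>, \<beta>) = (A, B)"
    unfolding T_map_def Let_def f_def g_def \<pi>_def A_def B_def by (simp only: fst_conv snd_conv)
  have ABp: "(A, B) = (\<alpha>, \<beta>)" using fp TM by metis
  have AB: "A = \<alpha>" "B = \<beta>" using ABp by (simp_all only: prod.inject)
  have e1: "\<forall>i. \<alpha> $ i + (1 / real CARD('m)) * (f i - (1 / (2 * real CARD('n))) * (\<Sum>k\<in>UNIV. f k)) = \<alpha> $ i"
  proof
    fix i
    have "A $ i = \<alpha> $ i" using AB(1) by (rule arg_cong)
    then show "\<alpha> $ i + (1 / real CARD('m)) * (f i - (1 / (2 * real CARD('n))) * (\<Sum>k\<in>UNIV. f k)) = \<alpha> $ i"
      unfolding A_def by (simp only: vec_lambda_beta)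
  qed
  have e2: "\<forall>j. \<beta> $ j + (1 / real CARD('n)) * (g j - (1 / (2 * real CARD('m))) * (\<Sum>l\<in>UNIV. g l)) = \<beta> $ j"
  proof
    fix j
    have "B $ j = \<beta> $ j" using AB(2) by (rule arg_cong)
    then show "\<beta> $ j + (1 / real CARD('n)) * (g j - (1 / (2 * real CARD('m))) * (\<Sum>l\<in>UNIV. g l)) = \<beta> $ j"
      unfolding B_def by (simp only: vec_lambda_beta)
  qed
  have f0: "f i = 0" for i
  proof (rule const_sum_zero, rule allI)
    fix i
    have "(1 / real CARD('m)) * (f i - (1 / (2 * real CARD('n))) * (\<Sum>k\<in>UNIV. f k)) = 0"
      using e1 by (metis add_cancel_left_right)
    then show "f i - (1 / (2 * real CARD('n))) * (\<Sum>k\<in>UNIV. f k) = 0" using M by simp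
  qed
  have g0: "g j = 0" for j
  proof (rule const_sum_zero, rule allI)
    fix j
    have "(1 / real CARD('n)) * (g j - (1 / (2 * real CARD('m))) * (\<Sum>l\<in>UNIV. g l)) = 0"
      using e2 by (metis add_cancel_left_right)
    then show "g j - (1 / (2 * real CARD('m))) * (\<Sum>l\<in>UNIV. g l) = 0" using N by simp
  qed
  have row: "(\<Sum>j\<in>UNIV. \<pi> $ i $ j) = \<mu> $ i" for i
    using f0[of i] assms(4) unfolding f_def by simp
  have col: "(\<Sum>i\<in>UNIV. \<pi> $ i $ j) = \<nu> $ j" for j
    using g0[of j] assms(4) unfolding g_def by simp
  have pij: "\<pi> $ i $ j = pos_part (\<alpha> $ i + \<beta> $ j - c $ i $ j) / \<gamma>" for i j
    unfolding \<pi>_def plan_def by simp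
  have nonneg: "\<pi> $ i $ j \<ge> 0" for i j
    using assms(4) by (simp add: pij pos_part_def)
  have feas: "feasible \<mu> \<nu> \<pi>" unfolding feasible_def using nonneg row col by simp
  have key1: "c $ i $ j + \<gamma> * \<pi> $ i $ j \<ge> \<alpha> $ i + \<beta> $ j" for i j
    using assms(4) by (simp add: pij pos_part_def)
  have key2: "(c $ i $ j + \<gamma> * \<pi> $ i $ j) * \<pi> $ i $ j = (\<alpha> $ i + \<beta> $ j) * \<pi> $ i $ j" for i j
    using assms(4) by (simp add: pij pos_part_def max_def)
  have opt: "ot_objective c \<gamma> \<pi> \<le> ot_objective c \<gamma> \<sigma>" if fs: "feasible \<mu> \<nu> \<sigma>" for \<sigma>
  proof -
    have s0: "\<sigma> $ i $ j \<ge> 0" for i j using fs unfolding feasible_def by simp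
    have srow: "(\<Sum>j\<in>UNIV. \<sigma> $ i $ j) = \<mu> $ i" for i using fs unfolding feasible_def by simp
    have scol: "(\<Sum>i\<in>UNIV. \<sigma> $ i $ j) = \<nu> $ j" for j using fs unfolding feasible_def by simp
    have pw: "c $ i $ j * \<pi> $ i $ j + \<gamma>/2 * (\<pi> $ i $ j)\<^sup>2 + (\<alpha> $ i + \<beta> $ j) * \<sigma> $ i $ j
        \<le> c $ i $ j * \<sigma> $ i $ j + \<gamma>/2 * (\<sigma> $ i $ j)\<^sup>2 + (\<alpha> $ i + \<beta> $ j) * \<pi> $ i $ j" for i j
    proof -
      have a: "(c $ i $ j + \<gamma> * \<pi> $ i $ j) * \<sigma> $ i $ j \<ge> (\<alpha> $ i + \<beta> $ j) * \<sigma> $ i $ j"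
        using key1[of i j] s0[of i j] by (simp add: mult_right_mono)
      have b: "\<gamma>/2 * (\<sigma> $ i $ j - \<pi> $ i $ j)\<^sup>2 \<ge> 0" using assms(4) by simp
      show ?thesis by (rule pw_aux[OF a key2[of i j] assms(4)])
    qed
    have lin: "(\<Sum>i\<in>UNIV. \<Sum>j\<in>UNIV. (\<alpha> $ i + \<beta> $ j) * x $ i $ j)
        = (\<Sum>i\<in>UNIV. \<alpha> $ i * \<mu> $ i) + (\<Sum>j\<in>UNIV. \<beta> $ j * \<nu> $ j)"
      if r: "\<And>i. (\<Sum>j\<in>UNIV. x $ i $ j) = \<mu> $ i" and cl: "\<And>j. (\<Sum>i\<in>UNIV. x $ i $ j) = \<nu> $ j"
      for x :: "real^'m^'n"
    proof -
      have "(\<Sum>i\<in>UNIV. \<Sum>j\<in>UNIV. (\<alpha> $ i + \<beta> $ j) * x $ i $ j)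
          = (\<Sum>i\<in>UNIV. \<alpha> $ i * (\<Sum>j\<in>UNIV. x $ i $ j)) + (\<Sum>i\<in>UNIV. \<Sum>j\<in>UNIV. \<beta> $ j * x $ i $ j)"
        by (simp add: distrib_right sum.distrib sum_distrib_left)
      also have "(\<Sum>i\<in>UNIV. \<Sum>j\<in>UNIV. \<beta> $ j * x $ i $ j) = (\<Sum>j\<in>UNIV. \<beta> $ j * (\<Sum>i\<in>UNIV. x $ i $ j))"
        by (subst sum.swap) (simp add: sum_distrib_left)
      finally show ?thesis using r cl by simp
    qed
    have L1: "(\<Sum>i\<in>UNIV. \<Sum>j\<in>UNIV. (\<alpha> $ i + \<beta> $ j) * \<pi> $ i $ j)
        = (\<Sum>i\<in>UNIV. \<Sum>j\<in>UNIV. (\<alpha> $ i + \<beta> $ j) * \<sigma> $ i $ j)"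
      using lin[of \<pi>, OF row col] lin[of \<sigma>, OF srow scol] by simp
    have "(\<Sum>i\<in>UNIV. \<Sum>j\<in>UNIV. c $ i $ j * \<pi> $ i $ j + \<gamma>/2 * (\<pi> $ i $ j)\<^sup>2 + (\<alpha> $ i + \<beta> $ j) * \<sigma> $ i $ j)
        \<le> (\<Sum>i\<in>UNIV. \<Sum>j\<in>UNIV. c $ i $ j * \<sigma> $ i $ j + \<gamma>/2 * (\<sigma> $ i $ j)\<^sup>2 + (\<alpha> $ i + \<beta> $ j) * \<pi> $ i $ j)"
      by (intro sum_mono pw)
    then have "(\<Sum>i\<in>UNIV. \<Sum>j\<in>UNIV. c $ i $ j * \<pi> $ i $ j) + \<gamma>/2 * (\<Sum>i\<in>UNIV. \<Sum>j\<in>UNIV. (\<pi> $ i $ j)\<^sup>2)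
        \<le> (\<Sum>i\<in>UNIV. \<Sum>j\<in>UNIV. c $ i $ j * \<sigma> $ i $ j) + \<gamma>/2 * (\<Sum>i\<in>UNIV. \<Sum>j\<in>UNIV. (\<sigma> $ i $ j)\<^sup>2)"
      using L1 by (simp add: sum.distrib sum_distrib_left)
    then show ?thesis unfolding ot_objective_def norm_sq_mat .
  qed
  have "optimal \<mu> \<nu> c \<gamma> \<pi>" unfolding optimal_def by (intro conjI allI impI feas opt)
  then show ?thesis unfolding \<pi>_def .
qed

end
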